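(* For an orthomodular lattice $\mathbb{L}$ the following are equivalent: (i) $\mathbb{L}$ is distributive; (ii) $\mathcal{Q}_a(\mathbb{L})\cup\mathcal{Q}_b(\mathbb{L})=\mathcal{Q}_{a\vee b}(\mathbb{L})$ for all $a,b\in\mathbb{L}$; (iii) $\mathcal{Q}_a(\mathbb{L})\cup\mathcal{Q}_{a^\perp}(\mathbb{L})=\mathcal{Q}(\mathbb{L})$ for all $a\in\mathbb{L}$; (iv) every subset of the Stone spectrum $\mathcal{Q}(\mathbb{L})$ which is both open and closed is of the form $\mathcal{Q}_a(\mathbb{L})$ for some $a\in\mathbb{L}$.
   Context: An orthomodular lattice is a lattice with least element $0$, greatest element $1$ and a map $a\mapsto a^\perp$ with $a\wedge a^\perp=0$, $a\vee a^\perp=1$, $(a\wedge b)^\perp=a^\perp\vee b^\perp$, $(a\vee b)^\perp=a^\perp\wedge b^\perp$, $a^{\perp\perp}=a$, such that $b\le a$ implies $b=a\wedge(a^\perp\vee b)$. A quasipoint in a lattice $\mathbb{L}$ with least element $0$ is a maximal (w.r.t. inclusion) subset $\mathfrak{B}\subseteq\mathbb{L}$ such that $\mathfrak{B}\neq\emptyset$, $0\notin\mathfrak{B}$, and for all $a,b\in\mathfrak{B}$ there is $c\in\mathfrak{B}$ with $c\le a\wedge b$. $\mathcal{Q}(\mathbb{L})$ denotes the set of quasipoints; for $a\in\mathbb{L}$ put $\mathcal{Q}_a(\mathbb{L})=\{\mathfrak{B}\in\mathcal{Q}(\mathbb{L}) : a\in\mathfrak{B}\}$. The Stone spectrum of $\mathbb{L}$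 is $\mathcal{Q}(\mathbb{L})$ with the topology having the sets $\mathcal{Q}_a(\mathbb{L})$ ($a\in\mathbb{L}$) as a basis. *)

theory Defs
  imports "HOL-Analysis.Analysis"
begin

definition orthomodular :: "('a::bounded_lattice \<Rightarrow> 'a) \<Rightarrow> bool" where
  "orthomodular oc \<longleftrightarrow>
     (\<forall>a. inf a (oc a) = bot) \<and>
     (\<forall>a. sup a (oc a) = top) \<and>
     (\<forall>a b. oc (inf a b) = sup (oc a) (oc b)) \<and>
     (\<forall>a b. oc (sup a b) = inf (oc a) (oc b)) \<and>
     (\<forall>a. oc (oc a) = a) \<and>
     (\<forall>a b. b \<le> a \<longrightarrow> b = inf a (sup (oc a) b))"

definition distributive_lattice :: "'a::lattice itself \<Rightarrow> bool" where
  "distributive_lattice _ \<longleftrightarrow>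
     (\<forall>x y z :: 'a. inf x (sup y z) = sup (inf x y) (inf x z))"

definition filter_base :: "'a::bounded_lattice set \<Rightarrow> bool" where
  "filter_base B \<longleftrightarrow> B \<noteq> {} \<and> bot \<notin> B \<and>
     (\<forall>a\<in>B. \<forall>b\<in>B. \<exists>c\<in>B. c \<le> inf a b)"

definition quasipoint :: "'a::bounded_lattice set \<Rightarrow> bool" where
  "quasipoint B \<longleftrightarrow> filter_base B \<and> (\<forall>C. filter_base C \<and> B \<subseteq> C \<longrightarrow> C = B)"

definition Qpts :: "'a::bounded_lattice set set" where
  "Qpts = {B. quasipoint B}"

definition Qa :: "'a::bounded_lattice \<Rightarrow> 'a set set" where
  "Qa a = {B \<in> Qpts. a \<in> B}"

definition stone_spectrum :: "'a::bounded_lattice set topology" where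
  "stone_spectrum = topology_generated_by (range Qa)"

end

theory Submission
  imports Defs
begin

lemma qp_fb: "quasipoint B \<Longrightarrow> filter_base B"
  by (simp add: quasipoint_def)

lemma qp_bot: "quasipoint B \<Longrightarrow> bot \<notin> B"
  by (simp add: quasipoint_def filter_base_def)

lemma qp_up:
  assumes q: "quasipoint B" and b: "b \<in> B" and le: "b \<le> d"
  shows "d \<in> B"
proof -
  have fb: "filter_base B" using q by (simp add: quasipoint_def)
  have "d \<noteq> bot" using b le qp_bot[OF q] by (metis bot.extremum_uniqueI)
  have "filter_base (insert d B)"
    unfolding filter_base_def
  proof (intro conjI ballI)
    show "insert d B \<noteq> {}" by simp
    show "bot \<notin> insert d B" using \<open>d \<noteq> bot\<close> fb by (auto simp: filter_base_def)
  next
    fix x y assume x: "x \<in> insert d B" and y: "y \<in> insert d B"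
    have dir: "\<And>x y. x \<in> B \<Longrightarrow> y \<in> B \<Longrightarrow> \<exists>c\<in>B. c \<le> inf x y" using fb by (simp add: filter_base_def)
    show "\<exists>c\<in>insert d B. c \<le> inf x y"
    proof (cases "x = d")
      case True
      show ?thesis
      proof (cases "y = d")
        case True
        then show ?thesis using \<open>x = d\<close> b le by auto
      next
        case False
        then have "y \<in> B" using y by auto
        then obtain c where "c \<in> B" "c \<le> inf b y" using dir b by blast
        then show ?thesis using le \<open>x = d\<close> by (metis insertCI le_inf_iff order_trans)
      qed
    next
      case False
      then have xB: "x \<in> B" using x by auto
      show ?thesis
      proof (cases "y = d")
        case True
        obtain c where "c \<in> B" "c \<le> inf x b" using dir b xB by blast
        then show ?thesis using le True by (metis insertCI le_inf_iff order_trans)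
      next
        case False
        then have "y \<in> B" using y by auto
        then show ?thesis using dir xB by blast
      qed
    qed
  qed
  then have "insert d B = B" using q unfolding quasipoint_def by blast
  then show ?thesis by blast
qed

lemma qp_inf:
  assumes q: "quasipoint B" and a: "a \<in> B" and b: "b \<in> B"
  shows "inf a b \<in> B"
proof -
  have "filter_base B" using q by (simp add: quasipoint_def)
  then obtain c where "c \<in> B" "c \<le> inf a b" using a b unfolding filter_base_def by blast
  then show ?thesis using qp_up[OF q] by blast
qed

lemma qp_top: "quasipoint B \<Longrightarrow> top \<in> B"
  using qp_up[of B _ top] by (auto simp: quasipoint_def filter_base_def)

lemma qp_notin:
  assumes q: "quasipoint B" and na: "a \<notin> B"
  shows "\<exists>c\<in>B. inf a c = bot"
proof (rule ccontr)
  assume H: "\<not> (\<exists>c\<in>B. inf a c = bot)"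
  have fb: "filter_base B" using q by (simp add: quasipoint_def)
  have dir: "\<And>x y. x \<in> B \<Longrightarrow> y \<in> B \<Longrightarrow> \<exists>c\<in>B. c \<le> inf x y" using fb by (simp add: filter_base_def)
  let ?C = "B \<union> (\<lambda>c. inf a c) ` B"
  have "filter_base ?C"
    unfolding filter_base_def
  proof (intro conjI ballI)
    show "?C \<noteq> {}" using fb by (auto simp: filter_base_def)
    show "bot \<notin> ?C" using H fb by (auto simp: filter_base_def)
  next
    fix x y assume x: "x \<in> ?C" and y: "y \<in> ?C"
    from x obtain x0 where x0: "x0 \<in> B" "x = x0 \<or> x = inf a x0" by auto
    from y obtain y0 where y0: "y0 \<in> B" "y = y0 \<or> y = inf a y0" by auto
    obtain c where c: "c \<in> B" "c \<le> inf x0 y0" using dir x0 y0 by blast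
    have "inf a c \<in> ?C" using c by auto
    moreover have "inf a c \<le> inf x y" using x0 y0 c
      by (auto simp: le_infI1 le_infI2 intro: order_trans)
    ultimately show "\<exists>c\<in>?C. c \<le> inf x y" by blast
  qed
  then have "?C = B" using q unfolding quasipoint_def by blast
  moreover obtain b where "b \<in> B" using fb by (auto simp: filter_base_def)
  ultimately have "inf a b \<in> B" by blast
  then have "a \<in> B" using qp_up[OF q] by (meson inf_le1)
  then show False using na by simp
qed

lemma fb_extend:
  assumes C: "filter_base C"
  shows "\<exists>B. quasipoint B \<and> C \<subseteq> B"
proof -
  let ?A = "{D. filter_base D \<and> C \<subseteq> D}"
  have "\<exists>M\<in>?A. \<forall>X\<in>?A. M \<subseteq> X \<longrightarrow> X = M"
  proof (rule subset_Zorn_nonempty)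
    show "?A \<noteq> {}" using C by blast
  next
    fix Ch assume ne: "Ch \<noteq> {}" and ch: "subset.chain ?A Ch"
    have sub: "Ch \<subseteq> ?A" and tot: "\<forall>X\<in>Ch. \<forall>Y\<in>Ch. X \<subseteq> Y \<or> Y \<subseteq> X"
      using ch by (auto simp: subset_chain_def)
    have "filter_base (\<Union>Ch)"
      unfolding filter_base_def
    proof (intro conjI ballI)
      show "\<Union>Ch \<noteq> {}" using ne sub by (force simp: filter_base_def)
      show "bot \<notin> \<Union>Ch" using sub by (force simp: filter_base_def)
    next
      fix x y assume "x \<in> \<Union>Ch" "y \<in> \<Union>Ch"
      then obtain X Y where XY: "X \<in> Ch" "Y \<in> Ch" "x \<in> X" "y \<in> Y" by blast
      then have "X \<subseteq> Y \<or> Y \<subseteq> X" using tot by blast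
      then obtain Z where Z: "Z \<in> Ch" "x \<in> Z" "y \<in> Z" using XY by blast
      then have "filter_base Z" using sub by blast
      then obtain c where "c \<in> Z" "c \<le> inf x y" using Z by (auto simp: filter_base_def)
      then show "\<exists>c\<in>\<Union>Ch. c \<le> inf x y" using Z by blast
    qed
    moreover have "C \<subseteq> \<Union>Ch" using ne sub by blast
    ultimately show "\<Union>Ch \<in> ?A" by blast
  qed
  then obtain M where M: "M \<in> ?A" "\<forall>X\<in>?A. M \<subseteq> X \<longrightarrow> X = M" by blast
  have "quasipoint M" unfolding quasipoint_def
  proof (intro conjI allI impI)
    show "filter_base M" using M by blast
    fix D assume "filter_base D \<and> M \<subseteq> D"
    then show "D = M" using M by blast
  qed
  then show ?thesis using M by blast
qed

lemma qp_exists: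
  assumes "(x::'a::bounded_lattice) \<noteq> bot"
  shows "\<exists>B. quasipoint B \<and> x \<in> B"
proof -
  have "filter_base {x}" using assms by (auto simp: filter_base_def)
  then show ?thesis using fb_extend by blast
qed


lemma Qa_iff: "B \<in> Qa a \<longleftrightarrow> quasipoint B \<and> a \<in> B"
  by (simp add: Qa_def Qpts_def)

lemma Qpts_iff: "B \<in> Qpts \<longleftrightarrow> quasipoint B"
  by (simp add: Qpts_def)

lemma Qa_top: "Qa top = Qpts"
  using qp_top by (auto simp: Qa_iff Qpts_iff)

lemma Qa_bot: "Qa bot = {}"
  using qp_bot by (fastforce simp: Qa_iff)

lemma Qa_inf: "Qa (inf a b) = Qa a \<inter> Qa b"
  unfolding Qa_iff set_eq_iff Int_iff by (meson inf_le1 inf_le2 qp_up qp_inf)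

lemma Qa_mono: "a \<le> b \<Longrightarrow> Qa a \<subseteq> Qa b"
  by (auto simp: Qa_iff intro: qp_up)

lemma Qa_sub: "Qa a \<subseteq> Qpts"
  by (auto simp: Qa_iff Qpts_iff)

lemma topspace_ss: "topspace stone_spectrum = Qpts"
  unfolding stone_spectrum_def using Qa_top Qa_sub by auto

lemma open_basic:
  assumes "openin stone_spectrum U" "x \<in> U"
  shows "\<exists>a. x \<in> Qa a \<and> Qa a \<subseteq> U"
proof -
  have "generate_topology_on (range Qa) U"
    using assms(1) unfolding stone_spectrum_def by (rule openin_topology_generated_by)
  then show ?thesis using assms(2)
  proof (induction arbitrary: x)
    case Empty then show ?case by simp
  next
    case (Int a b)
    obtain p where "x \<in> Qa p" "Qa p \<subseteq> a" using Int by blast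
    moreover obtain q where "x \<in> Qa q" "Qa q \<subseteq> b" using Int by blast
    ultimately have "x \<in> Qa (inf p q) \<and> Qa (inf p q) \<subseteq> a \<inter> b" by (auto simp: Qa_inf)
    then show ?case by blast
  next
    case (UN K)
    then obtain k where "k \<in> K" "x \<in> k" by blast
    then show ?case using UN by blast
  next
    case (Basis s)
    then show ?case by blast
  qed
qed

lemma open_intro:
  assumes "\<And>x. x \<in> U \<Longrightarrow> \<exists>a. x \<in> Qa a \<and> Qa a \<subseteq> U"
  shows "openin stone_spectrum U"
proof -
  have eq: "U = \<Union>{Qa a | a. Qa a \<subseteq> U}" using assms by blast
  have "generate_topology_on (range Qa) (\<Union>{Qa a | a. Qa a \<subseteq> U})"
    by (rule generate_topology_on.UN) (auto intro: generate_topology_on.Basis)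
  then show ?thesis unfolding stone_spectrum_def
    by (subst eq) (simp add: openin_topology_generated_by_iff)
qed

context
  fixes oc :: "'a::bounded_lattice \<Rightarrow> 'a"
  assumes om: "orthomodular oc"
begin

lemma oc_inf: "inf a (oc a) = bot" using om by (simp add: orthomodular_def)
lemma oc_sup: "sup a (oc a) = top" using om by (simp add: orthomodular_def)
lemma oc_oc: "oc (oc a) = a" using om by (simp add: orthomodular_def)
lemma oc_supd: "oc (sup a b) = inf (oc a) (oc b)" using om by (simp add: orthomodular_def)
lemma oc_infd: "oc (inf a b) = sup (oc a) (oc b)" using om by (simp add: orthomodular_def)
lemma oc_law: "b \<le> a \<Longrightarrow> b = inf a (sup (oc a) b)" using om by (simp add: orthomodular_def)

lemma oc_anti: "b \<le> a \<Longrightarrow> oc a \<le> oc b"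
  by (metis oc_supd inf.cobounded1 sup.absorb2)

lemma oc_bot: "oc bot = top"
  using oc_sup[of bot] by simp

lemma oc_eq_bot: "oc (x::'a) = bot \<Longrightarrow> x = top"
  by (metis oc_oc oc_bot)

lemma om_le: "(b::'a) \<le> a \<Longrightarrow> a = sup b (inf (oc b) a)"
proof -
  assume "b \<le> a"
  then have "oc a \<le> oc b" by (rule oc_anti)
  then have "oc a = inf (oc b) (sup (oc (oc b)) (oc a))" by (rule oc_law)
  then have "oc (oc a) = oc (inf (oc b) (sup b (oc a)))" by (simp add: oc_oc)
  then show ?thesis by (simp add: oc_oc oc_infd oc_supd)
qed

lemma Qa_le:
  fixes x y :: 'a
  assumes "Qa x \<subseteq> Qa y" shows "x \<le> y"
proof (rule ccontr)
  assume "\<not> x \<le> y"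
  have "inf x y \<le> x" by simp
  then have xe: "x = sup (inf x y) (inf (oc (inf x y)) x)" by (rule om_le)
  have "inf (oc (inf x y)) x \<noteq> bot"
  proof
    assume "inf (oc (inf x y)) x = bot"
    then have "x = inf x y" using xe by simp
    then show False using \<open>\<not> x \<le> y\<close> by (metis inf.cobounded2)
  qed
  then obtain B where B: "quasipoint B" "inf (oc (inf x y)) x \<in> B" using qp_exists by blast
  then have "x \<in> B" "oc (inf x y) \<in> B" using qp_up by (meson inf_le1 inf_le2)+
  then have "y \<in> B" using assms B by (auto simp: Qa_iff)
  then have "inf x y \<in> B" using qp_inf B \<open>x \<in> B\<close> by blast
  then have "inf (inf x y) (oc (inf x y)) \<in> B" using qp_inf B \<open>oc (inf x y) \<in> B\<close> by blast
  then show False using qp_bot[OF B(1)] by (simp add: oc_inf)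
qed

lemma iii_ii:
  fixes a b :: 'a
  assumes "\<forall>a. Qa a \<union> Qa (oc a) = Qpts"
  shows "Qa a \<union> Qa b = Qa (sup a b)"
proof
  show "Qa a \<union> Qa b \<subseteq> Qa (sup a b)" using Qa_mono[of a "sup a b"] Qa_mono[of b "sup a b"] by auto
  show "Qa (sup a b) \<subseteq> Qa a \<union> Qa b"
  proof
    fix B assume B: "B \<in> Qa (sup a b)"
    then have q: "quasipoint B" "sup a b \<in> B" by (auto simp: Qa_iff)
    show "B \<in> Qa a \<union> Qa b"
    proof (rule ccontr)
      assume "B \<notin> Qa a \<union> Qa b"
      moreover have "B \<in> Qpts" using q by (simp add: Qpts_iff)
      ultimately have "oc a \<in> B" "oc b \<in> B" using assms[rule_format, of a] assms[rule_format, of b]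
        by (auto simp: Qa_iff)
      then have "oc (sup a b) \<in> B" using qp_inf q by (simp add: oc_supd)
      then have "inf (sup a b) (oc (sup a b)) \<in> B" using qp_inf q by blast
      then show False using qp_bot[OF q(1)] by (simp add: oc_inf)
    qed
  qed
qed

lemma D_ii:
  fixes a b :: 'a
  assumes D: "distributive_lattice TYPE('a)"
  shows "Qa a \<union> Qa b = Qa (sup a b)"
proof
  show "Qa a \<union> Qa b \<subseteq> Qa (sup a b)" using Qa_mono[of a "sup a b"] Qa_mono[of b "sup a b"] by auto
  show "Qa (sup a b) \<subseteq> Qa a \<union> Qa b"
  proof
    fix B assume "B \<in> Qa (sup a b)"
    then have q: "quasipoint B" "sup a b \<in> B" by (auto simp: Qa_iff)
    show "B \<in> Qa a \<union> Qa b"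
    proof (rule ccontr)
      assume "B \<notin> Qa a \<union> Qa b"
      then have "a \<notin> B" "b \<notin> B" using q by (auto simp: Qa_iff)
      then obtain c d where cd: "c \<in> B" "inf a c = bot" "d \<in> B" "inf b d = bot"
        using qp_notin[OF q(1)] by metis
      let ?e = "inf c d"
      have "?e \<in> B" using qp_inf q cd by blast
      then have "inf (sup a b) ?e \<in> B" using qp_inf q by blast
      moreover have "inf (sup a b) ?e = sup (inf ?e a) (inf ?e b)"
        using D unfolding distributive_lattice_def by (metis inf_commute)
      moreover have "inf ?e a = bot"
      proof -
        have "inf ?e a \<le> inf a c" by (simp add: le_infI1 le_infI2 inf.coboundedI1)
        then show ?thesis using cd(2) by (simp add: bot_unique)
      qed
      moreover have "inf ?e b = bot"
      proof -
        have "inf ?e b \<le> inf b d" by (simp add: le_infI1 le_infI2 inf.coboundedI2)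
        then show ?thesis using cd(4) by (simp add: bot_unique)
      qed
      ultimately show False using qp_bot[OF q(1)] by simp
    qed
  qed
qed

lemma ii_D:
  assumes ii: "\<forall>a b :: 'a. Qa a \<union> Qa b = Qa (sup a b)"
  shows "distributive_lattice TYPE('a)"
  unfolding distributive_lattice_def
proof (intro allI)
  fix x y z :: 'a
  have "Qa (inf x (sup y z)) \<subseteq> Qa (sup (inf x y) (inf x z))"
  proof
    fix B assume "B \<in> Qa (inf x (sup y z))"
    then have q: "quasipoint B" "inf x (sup y z) \<in> B" by (auto simp: Qa_iff)
    then have x: "x \<in> B" and yz: "sup y z \<in> B" using qp_up by (meson inf_le1 inf_le2)+
    then have "B \<in> Qa y \<union> Qa z" using ii q by (auto simp: Qa_iff)
    then have "inf x y \<in> B \<or> inf x z \<in> B" using qp_inf q x by (auto simp: Qa_iff)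
    then have "sup (inf x y) (inf x z) \<in> B" using qp_up q by (meson sup_ge1 sup_ge2)
    then show "B \<in> Qa (sup (inf x y) (inf x z))" using q by (simp add: Qa_iff)
  qed
  then have "inf x (sup y z) \<le> sup (inf x y) (inf x z)" by (rule Qa_le)
  moreover have "sup (inf x y) (inf x z) \<le> inf x (sup y z)"
    by (simp add: le_supI1 le_supI2)
  ultimately show "inf x (sup y z) = sup (inf x y) (inf x z)" by (rule antisym)
qed

lemma ii_iii:
  assumes ii: "\<forall>a b :: 'a. Qa a \<union> Qa b = Qa (sup a b)"
  shows "Qa a \<union> Qa (oc a) = Qpts"
proof -
  have "Qa a \<union> Qa (oc a) = Qa (sup a (oc a))" using ii by blast
  also have "\<dots> = Qpts" by (simp add: oc_sup Qa_top)
  finally show ?thesis .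
qed

lemma ii_iv:
  assumes ii: "\<forall>a b :: 'a. Qa a \<union> Qa b = Qa (sup a b)"
    and U: "openin stone_spectrum U" "closedin stone_spectrum U"
  shows "\<exists>a :: 'a. U = Qa a"
proof -
  let ?V = "Qpts - U"
  have V: "openin stone_spectrum ?V" using U(2) by (simp add: closedin_def topspace_ss)
  have UQ: "U \<subseteq> Qpts" using U(2) by (simp add: closedin_def topspace_ss)
  define A where "A = {a::'a. Qa a \<subseteq> U}"
  define Bs where "Bs = {b::'a. Qa b \<subseteq> ?V}"
  have A_sup: "sup a a' \<in> A" if "a \<in> A" "a' \<in> A" for a a'
  proof -
    have "Qa (sup a a') = Qa a \<union> Qa a'" using ii by simp
    then show ?thesis using that unfolding A_def by simp
  qed
  have B_sup: "sup a a' \<in> Bs" if "a \<in> Bs" "a' \<in> Bs" for a a'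
  proof -
    have "Qa (sup a a') = Qa a \<union> Qa a'" using ii by simp
    then show ?thesis using that unfolding Bs_def by simp
  qed
  have botA: "bot \<in> A" and botB: "bot \<in> Bs" by (auto simp: A_def Bs_def Qa_bot)
  have "\<exists>a\<in>A. \<exists>b\<in>Bs. sup a b = top"
  proof (rule ccontr)
    assume H: "\<not> (\<exists>a\<in>A. \<exists>b\<in>Bs. sup a b = top)"
    let ?D = "{inf (oc a) (oc b) | a b. a \<in> A \<and> b \<in> Bs}"
    have "filter_base ?D"
      unfolding filter_base_def
    proof (intro conjI ballI)
      have "inf (oc bot) (oc bot) \<in> ?D" using botA botB by blast
      then show "?D \<noteq> {}" by blast
      show "bot \<notin> ?D"
      proof
        assume "bot \<in> ?D"
        then obtain a b where "a \<in> A" "b \<in> Bs" "bot = inf (oc a) (oc b)" by (auto simp only: mem_Collect_eq)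
        then have "inf (oc a) (oc b) = bot" "a \<in> A" "b \<in> Bs" by simp_all
        then have "oc (sup a b) = bot" by (simp add: oc_supd)
        then have "sup a b = top" by (rule oc_eq_bot)
        then show False using H \<open>a \<in> A\<close> \<open>b \<in> Bs\<close> by blast
      qed
    next
      fix x y assume "x \<in> ?D" "y \<in> ?D"
      then obtain a b a' b' where ab: "a \<in> A" "b \<in> Bs" "x = inf (oc a) (oc b)"
        "a' \<in> A" "b' \<in> Bs" "y = inf (oc a') (oc b')" by blast
      have "sup a a' \<in> A" "sup b b' \<in> Bs" using ab A_sup B_sup by simp_all
      then have "inf (oc (sup a a')) (oc (sup b b')) \<in> ?D" by blast
      moreover have "inf (oc (sup a a')) (oc (sup b b')) = inf x y"
        using ab by (simp add: oc_supd inf.assoc inf.commute inf.left_commute)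
      ultimately have "inf x y \<in> ?D" by simp
      then show "\<exists>c\<in>?D. c \<le> inf x y" by (intro bexI[of _ "inf x y"]) simp_all
    qed
    then obtain Q where Q: "quasipoint Q" "?D \<subseteq> Q" using fb_extend by blast
    have "Q \<in> U \<or> Q \<in> ?V" using Q by (simp add: Qpts_iff)
    then show False
    proof
      assume "Q \<in> U"
      then obtain a where a: "Q \<in> Qa a" "Qa a \<subseteq> U" using open_basic U(1) by blast
      then have "a \<in> A" "a \<in> Q" by (auto simp: A_def Qa_iff)
      then have "inf (oc a) (oc bot) \<in> ?D" using botB by blast
      then have "inf (oc a) (oc bot) \<in> Q" using Q(2) by (rule rev_subsetD)
      then have "oc a \<in> Q" by (simp add: oc_bot)
      then have "inf a (oc a) \<in> Q" using qp_inf Q \<open>a \<in> Q\<close> by blast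
      then show False using qp_bot[OF Q(1)] by (simp add: oc_inf)
    next
      assume "Q \<in> ?V"
      then obtain b where b: "Q \<in> Qa b" "Qa b \<subseteq> ?V" using open_basic V by blast
      then have "b \<in> Bs" "b \<in> Q" by (auto simp: Bs_def Qa_iff)
      then have "inf (oc bot) (oc b) \<in> ?D" using botA by blast
      then have "inf (oc bot) (oc b) \<in> Q" using Q(2) by (rule rev_subsetD)
      then have "oc b \<in> Q" by (simp add: oc_bot)
      then have "inf b (oc b) \<in> Q" using qp_inf Q \<open>b \<in> Q\<close> by blast
      then show False using qp_bot[OF Q(1)] by (simp add: oc_inf)
    qed
  qed
  then obtain a b where ab: "a \<in> A" "b \<in> Bs" "sup a b = top" by blast
  have "U = Qa a"
  proof
    show "Qa a \<subseteq> U" using ab A_def by blast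
    show "U \<subseteq> Qa a"
    proof
      fix Q assume "Q \<in> U"
      then have "Q \<in> Qa (sup a b)" using UQ ab(3) Qa_top by auto
      then have "Q \<in> Qa a \<union> Qa b" using ii by blast
      then show "Q \<in> Qa a" using ab(2) \<open>Q \<in> U\<close> Bs_def by blast
    qed
  qed
  then show ?thesis by blast
qed

lemma iv_iii:
  fixes a :: 'a
  assumes iv: "\<forall>U. openin stone_spectrum U \<and> closedin stone_spectrum U \<longrightarrow> (\<exists>a :: 'a. U = Qa a)"
  shows "Qa a \<union> Qa (oc a) = Qpts"
proof -
  let ?S = "Qa a \<union> Qa (oc a)"
  have o: "openin stone_spectrum ?S"
  proof (rule open_intro)
    fix x assume "x \<in> ?S"
    then show "\<exists>b. x \<in> Qa b \<and> Qa b \<subseteq> ?S"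
    proof
      assume "x \<in> Qa a" then show ?thesis by (intro exI[of _ a]) simp
    next
      assume "x \<in> Qa (oc a)" then show ?thesis by (intro exI[of _ "oc a"]) simp
    qed
  qed
  have c0: "openin stone_spectrum (Qpts - ?S)"
  proof (rule open_intro)
    fix x assume x: "x \<in> Qpts - ?S"
    then have q: "quasipoint x" "a \<notin> x" "oc a \<notin> x" by (auto simp: Qpts_iff Qa_iff)
    then obtain c d where cd: "c \<in> x" "inf a c = bot" "d \<in> x" "inf (oc a) d = bot"
      using qp_notin[OF q(1)] by metis
    have "x \<in> Qa (inf c d)" using qp_inf cd q by (simp add: Qa_iff)
    moreover have "Qa (inf c d) \<subseteq> Qpts - ?S"
    proof
      fix y assume y: "y \<in> Qa (inf c d)"
      then have qy: "quasipoint y" "c \<in> y" "d \<in> y" by (auto simp: Qa_inf Qa_iff)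
      have "a \<notin> y"
      proof
        assume "a \<in> y" then have "inf a c \<in> y" using qp_inf qy by blast
        then show False using qp_bot[OF qy(1)] cd by simp
      qed
      moreover have "oc a \<notin> y"
      proof
        assume "oc a \<in> y" then have "inf (oc a) d \<in> y" using qp_inf qy by blast
        then show False using qp_bot[OF qy(1)] cd by simp
      qed
      ultimately show "y \<in> Qpts - ?S" using qy by (simp add: Qa_iff Qpts_iff)
    qed
    ultimately show "\<exists>b. x \<in> Qa b \<and> Qa b \<subseteq> Qpts - ?S" by blast
  qed
  have "closedin stone_spectrum ?S"
    using c0 Qa_sub[of a] Qa_sub[of "oc a"] by (simp add: closedin_def topspace_ss)
  then obtain e :: 'a where e: "?S = Qa e" using iv o by blast
  have "Qa a \<subseteq> Qa e" using e by (metis Un_upper1)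
  then have ae: "a \<le> e" by (rule Qa_le)
  have "Qa (oc a) \<subseteq> Qa e" using e by (metis Un_upper2)
  then have "oc a \<le> e" by (rule Qa_le)
  with ae have "sup a (oc a) \<le> e" by (rule sup_least)
  then have "top \<le> e" by (simp add: oc_sup)
  then have "e = top" by (simp add: top_unique)
  then show ?thesis using e Qa_top by simp
qed

end

theorem proposition3p16:
  fixes oc :: "'a::bounded_lattice \<Rightarrow> 'a"
  assumes "orthomodular oc"
  shows "(distributive_lattice TYPE('a) \<longleftrightarrow> (\<forall>a b :: 'a. Qa a \<union> Qa b = Qa (sup a b)))
       \<and> (distributive_lattice TYPE('a) \<longleftrightarrow> (\<forall>a :: 'a. Qa a \<union> Qa (oc a) = Qpts))
       \<and> (distributive_lattice TYPE('a) \<longleftrightarrow>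
            (\<forall>U. openin stone_spectrum U \<and> closedin stone_spectrum U \<longrightarrow> (\<exists>a :: 'a. U = Qa a)))"
proof -
  note om = assms
  let ?D = "distributive_lattice TYPE('a)"
  let ?ii = "\<forall>a b :: 'a. Qa a \<union> Qa b = Qa (sup a b)"
  let ?iii = "\<forall>a :: 'a. Qa a \<union> Qa (oc a) = Qpts"
  let ?iv = "\<forall>U. openin stone_spectrum U \<and> closedin stone_spectrum U \<longrightarrow> (\<exists>a :: 'a. U = Qa a)"
  have 1: "?D \<longleftrightarrow> ?ii"
  proof
    assume ?D then show ?ii using D_ii[OF om] by simp
  next
    assume ?ii then show ?D by (rule ii_D[OF om])
  qed
  have 2: "?ii \<longleftrightarrow> ?iii"
  proof
    assume ?ii then show ?iii using ii_iii[OF om] by simp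
  next
    assume ?iii then show ?ii using iii_ii[OF om] by simp
  qed
  have 3: "?ii \<longleftrightarrow> ?iv"
  proof
    assume ii: ?ii
    show ?iv
    proof (intro allI impI)
      fix U :: "'a set set" assume "openin stone_spectrum U \<and> closedin stone_spectrum U"
      then show "\<exists>a :: 'a. U = Qa a" using ii_iv[OF om ii] by simp
    qed
  next
    assume ?iv
    then have ?iii using iv_iii[OF om] by simp
    then show ?ii using 2 by simp
  qed
  show ?thesis using 1 2 3 by simp
qed

end
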